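(* There are absolute constants $c>0$ and $C>0$ such that the following holds. Let $N\ge2$ and let $f(s)=\sum_{n=1}^Na_nn^{-s}$ be a Dirichlet polynomial with complex coefficients. If $k\ge cN/\log N$ (more precisely, whenever $k\ge\pi(N)$), then \[\|f\|_\infty\le C\|f\|_{2k},\] where $\|f\|_q=\big(\lim_{T\to\infty}\frac1T\int_0^T|f(it)|^q\,dt\big)^{1/q}$ for $0<q<\infty$ and $\|f\|_\infty=\sup_{t\in\mathbb{R}}|f(it)|$.
   Context: $\pi(N)$ denotes the number of primes $\le N$. The paper states the result as: if $k\gg N/\log N$ then $\|f\|_\infty\ll\|f\|_{2k}$; its argument gives the bound for all real $k\ge\pi(N)$ with constant $C=4\pi^2e$. *)

theory Defs
  imports "HOL-Analysis.Analysis" "HOL-Computational_Algebra.Primes"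
begin

text \<open>The Dirichlet polynomial f(s) = sum_{n=1}^N a_n n^(-s), evaluated on the
  imaginary axis s = i t:  f(i t) = sum_{n=1}^N a_n exp(- i t ln n).\<close>
definition dirichlet_poly_it :: "(nat \<Rightarrow> complex) \<Rightarrow> nat \<Rightarrow> real \<Rightarrow> complex" where
  "dirichlet_poly_it a N t = (\<Sum>n=1..N. a n * exp (- \<i> * complex_of_real (t * ln (real n))))"

definition dp_norm :: "real \<Rightarrow> (nat \<Rightarrow> complex) \<Rightarrow> nat \<Rightarrow> real" where
  "dp_norm q a N =
     (Lim at_top (\<lambda>T::real. (1 / T) * integral {0..T}
        (\<lambda>t. cmod (dirichlet_poly_it a N t) powr q))) powr (1 / q)"

definition dp_sup_norm :: "(nat \<Rightarrow> complex) \<Rightarrow> nat \<Rightarrow> real" where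
  "dp_sup_norm a N = (SUP t::real. cmod (dirichlet_poly_it a N t))"

definition prime_pi :: "nat \<Rightarrow> nat" where
  "prime_pi N = card {p::nat. prime p \<and> p \<le> N}"

end

theory Submission
  imports Defs
begin

lemma prod_primes_dvd:
  fixes A :: "nat set"
  assumes "finite A" "\<And>p. p \<in> A \<Longrightarrow> prime p" "\<And>p. p \<in> A \<Longrightarrow> p dvd x"
  shows "\<Prod>A dvd x"
  using assms
proof (induction A rule: finite_induct)
  case empty then show ?case by simp
next
  case (insert p A)
  have pp: "prime p" using insert by auto
  have "\<not> p dvd \<Prod>A"
  proof
    assume "p dvd \<Prod>A"
    then obtain q where "q \<in> A" "p dvd q" using prime_dvd_prod_iff[OF insert(1) pp] by auto
    moreover have "prime q" using insert \<open>q \<in> A\<close> by auto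
    ultimately have "p = q" using pp primes_dvd_imp_eq by blast
    with \<open>q \<in> A\<close> insert(2) show False by simp
  qed
  then have "coprime p (\<Prod>A)" using pp prime_imp_coprime by blast
  moreover have "\<Prod>A dvd x" using insert by auto
  moreover have "p dvd x" using insert by auto
  ultimately show ?case using insert(1,2) by (simp add: divides_mult)
qed

lemma central_binom_odd_le: "(2*m+1 choose m) \<le> 4^m"
proof -
  have "(2*m+1 choose m) + (2*m+1 choose (m+1)) = (\<Sum>k\<in>{m,m+1}. (2*m+1) choose k)" by simp
  also have "\<dots> \<le> (\<Sum>k\<le>2*m+1. (2*m+1) choose k)" by (intro sum_mono2) auto
  also have "\<dots> = 2^(2*m+1)" by (rule choose_row_sum)
  finally have "(2*m+1 choose m) + (2*m+1 choose (m+1)) \<le> 2^(2*m+1)" .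
  moreover have "(2*m+1 choose (m+1)) = (2*m+1 choose m)"
    using binomial_symmetric[of "m" "2*m+1"] by simp
  ultimately have "2 * (2*m+1 choose m) \<le> 2 * 4^m" by (simp add: power_mult)
  then show ?thesis by simp
qed

lemma primorial_le: "\<Prod>{p::nat. prime p \<and> p \<le> n} \<le> 4^n"
proof (induction n rule: less_induct)
  case (less n)
  show ?case
  proof (cases "n \<le> 2")
    case True
    then have "n = 0 \<or> n = 1 \<or> n = 2" by auto
    then show ?thesis
    proof (elim disjE)
      assume "n = 0" then have "{p::nat. prime p \<and> p \<le> n} = {}" by (auto dest: prime_gt_1_nat)
      note e = this show ?thesis unfolding e by simp
    next
      assume "n = 1" then have "{p::nat. prime p \<and> p \<le> n} = {}" by (auto dest: prime_gt_1_nat)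
      note e = this show ?thesis unfolding e by simp
    next
      assume "n = 2" then have "{p::nat. prime p \<and> p \<le> n} = {2}" by (auto dest: prime_gt_1_nat)
      note e = this show ?thesis unfolding e using \<open>n = 2\<close> by simp
    qed
  next
    case False
    show ?thesis
    proof (cases "even n")
      case True
      have "{p::nat. prime p \<and> p \<le> n} = {p. prime p \<and> p \<le> n - 1}"
      proof -
        have "\<not> prime n" using True False prime_odd_nat[of n] by auto
        show ?thesis
        proof (intro set_eqI iffI)
          fix x assume "x \<in> {p::nat. prime p \<and> p \<le> n}"
          then have "prime x" "x \<le> n" by auto
          moreover then have "x \<noteq> n" using \<open>\<not> prime n\<close> by metis
          ultimately show "x \<in> {p. prime p \<and> p \<le> n - 1}" by simp
        qed auto
      qed
      then have "\<Prod>{p::nat. prime p \<and> p \<le> n} \<le> 4^(n-1)" using less[of "n-1"] False by simp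
      also have "\<dots> \<le> 4^n" by (intro power_increasing) auto
      finally show ?thesis .
    next
      case odd: False
      then obtain m where n: "n = 2*m+1" by (metis oddE)
      have m1: "m \<ge> 1" using False n by simp
      let ?A = "{p::nat. prime p \<and> p \<le> m+1}"
      let ?B = "{p::nat. prime p \<and> m+1 < p \<and> p \<le> 2*m+1}"
      have split: "{p::nat. prime p \<and> p \<le> n} = ?A \<union> ?B" using n by auto
      have fA: "finite ?A" by simp
      have fB: "finite ?B" by simp
      have e: "\<Prod>{p::nat. prime p \<and> p \<le> n} = \<Prod>?A * \<Prod>?B"
        unfolding split by (rule prod.union_disjoint) auto
      have a: "\<Prod>?A \<le> 4^(m+1)" using less[of "m+1"] n m1 by simp
      have b: "\<Prod>?B \<le> 4^m"
      proof -
        have "\<Prod>?B dvd (2*m+1 choose m)"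
        proof (rule prod_primes_dvd)
          fix p assume p: "p \<in> ?B"
          then have pp: "prime p" by simp
          have "p dvd fact (2*m+1)" using p prime_dvd_fact_iff[OF pp] by (simp del: fact_Suc)
          moreover have h: "2*m+1-m = m+1" by simp
          have "fact (2*m+1) = fact m * fact (m+1) * (2*m+1 choose m)"
            using binomial_fact_lemma[of m "2*m+1"] unfolding h by simp
          ultimately have "p dvd fact m * fact (m+1) * (2*m+1 choose m)" by simp
          moreover have "\<not> p dvd fact m" using p prime_dvd_fact_iff[OF pp] by (simp del: fact_Suc)
          moreover have "\<not> p dvd fact (m+1)" using p prime_dvd_fact_iff[OF pp] by (simp del: fact_Suc)
          ultimately show "p dvd (2*m+1 choose m)" using pp prime_dvd_mult_iff by blast
        qed auto
        then have "\<Prod>?B \<le> (2*m+1 choose m)"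
          by (intro dvd_imp_le) auto
        also have "\<dots> \<le> 4^m" by (rule central_binom_odd_le)
        finally show ?thesis .
      qed
      have "\<Prod>{p::nat. prime p \<and> p \<le> n} \<le> 4^(m+1) * 4^m"
        unfolding e by (intro mult_le_mono a b)
      also have "\<dots> = 4^n" using n by (simp add: power_add[symmetric])
      finally show ?thesis .
    qed
  qed
qed


lemma ln_le_2sqrt: "x > 0 \<Longrightarrow> ln x \<le> 2 * sqrt x"
proof -
  assume x: "x > 0"
  have "ln x = 2 * ln (sqrt x)" using x by (simp add: ln_sqrt)
  also have "\<dots> \<le> 2 * (sqrt x - 1)" using x by (intro mult_left_mono ln_le_minus_one) auto
  finally show ?thesis by simp
qed

lemma card_small_primes:
  "real (card {p::nat. prime p \<and> p \<le> N \<and> p * p \<le> N}) \<le> sqrt (real N)"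
proof -
  define s where "s = nat \<lfloor>sqrt (real N)\<rfloor>"
  have "{p::nat. prime p \<and> p \<le> N \<and> p * p \<le> N} \<subseteq> {1..s}"
  proof
    fix p assume "p \<in> {p::nat. prime p \<and> p \<le> N \<and> p * p \<le> N}"
    then have p: "prime p" "p * p \<le> N" by auto
    have "real p * real p \<le> real N" using p(2) by (metis of_nat_le_iff of_nat_mult)
    then have "real p \<le> sqrt (real N)" by (simp add: real_le_rsqrt power2_eq_square)
    then have "p \<le> s" unfolding s_def by (simp add: le_nat_floor le_floor_iff)
    moreover have "p \<ge> 1" using p prime_gt_0_nat by (simp add: Suc_leI)
    ultimately show "p \<in> {1..s}" by simp
  qed
  then have "card {p::nat. prime p \<and> p \<le> N \<and> p * p \<le> N} \<le> s"
    using card_mono[of "{1..s}"] by fastforce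
  then have "real (card {p::nat. prime p \<and> p \<le> N \<and> p * p \<le> N}) \<le> real s" by simp
  also have "real s \<le> sqrt (real N)" unfolding s_def by simp
  finally show ?thesis .
qed

lemma prime_pi_upper:
  assumes N: "N \<ge> 2"
  shows "real (prime_pi N) \<le> 8 * real N / ln (real N)"
proof -
  define P where "P = {p::nat. prime p \<and> p \<le> N}"
  define P1 where "P1 = {p::nat. prime p \<and> p \<le> N \<and> p * p \<le> N}"
  define P2 where "P2 = {p::nat. prime p \<and> p \<le> N \<and> \<not> p * p \<le> N}"
  have fin: "finite P" "finite P1" "finite P2" unfolding P_def P1_def P2_def by auto
  have PU: "P = P1 \<union> P2" "P1 \<inter> P2 = {}" unfolding P_def P1_def P2_def by auto
  have lnN: "ln (real N) > 0" using N by simp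
  have c1: "real (card P1) \<le> sqrt (real N)" unfolding P1_def by (rule card_small_primes)
  have "real (card P2) * (ln (real N) / 2) \<le> (\<Sum>p\<in>P2. ln (real p))"
  proof -
    have "real (card P2) * (ln (real N) / 2) = (\<Sum>p\<in>P2. ln (real N) / 2)" by simp
    also have "\<dots> \<le> (\<Sum>p\<in>P2. ln (real p))"
    proof (intro sum_mono)
      fix p assume "p \<in> P2"
      then have "N < p * p" "prime p" unfolding P2_def by auto
      then have "real N < real p * real p" by (metis of_nat_less_iff of_nat_mult)
      then have "ln (real N) < ln (real p * real p)" using N by (intro ln_less_cancel_iff[THEN iffD2]) auto
      also have "\<dots> = 2 * ln (real p)" using \<open>prime p\<close> prime_gt_0_nat by (simp add: ln_mult)
      finally show "ln (real N) / 2 \<le> ln (real p)" by simp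
    qed
    finally show ?thesis .
  qed
  also have "\<dots> \<le> (\<Sum>p\<in>P. ln (real p))"
    using fin PU by (intro sum_mono2) (auto simp: P1_def dest: prime_gt_0_nat)
  also have "\<dots> = ln (\<Prod>p\<in>P. real p)"
    by (subst ln_prod) (auto simp: P_def fin dest: prime_gt_0_nat)
  also have "(\<Prod>p\<in>P. real p) = real (\<Prod>P)" by simp
  also have "ln (real (\<Prod>P)) \<le> ln (4 ^ N)"
  proof -
    have "\<Prod>P \<le> 4^N" unfolding P_def by (rule primorial_le)
    then have "real (\<Prod>P) \<le> 4 ^ N" by (metis of_nat_le_iff of_nat_numeral of_nat_power)
    moreover have "real (\<Prod>P) > 0" using fin by (auto simp: P_def intro!: prod_pos dest: prime_gt_0_nat)
    ultimately show ?thesis by simp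
  qed
  also have "ln (4 ^ N :: real) = real N * ln 4" by (simp add: ln_realpow)
  finally have c2: "real (card P2) * (ln (real N) / 2) \<le> real N * ln 4" .
  have ln4: "ln (4::real) \<le> 3" using ln_le_minus_one[of 4] by simp
  have c2': "real (card P2) \<le> 6 * real N / ln (real N)"
  proof -
    have "real (card P2) * ln (real N) \<le> 2 * real N * ln 4" using c2 by simp
    also have "\<dots> \<le> 6 * real N" using ln4 by (simp add: mult_left_mono mult.commute)
    finally show ?thesis using lnN by (simp add: field_simps)
  qed
  have c1': "sqrt (real N) \<le> 2 * real N / ln (real N)"
  proof -
    have "sqrt (real N) * ln (real N) \<le> sqrt (real N) * (2 * sqrt (real N))"
      using ln_le_2sqrt[of "real N"] N by (intro mult_left_mono) auto
    also have "\<dots> = 2 * real N" by simp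
    finally show ?thesis using lnN by (simp add: field_simps)
  qed
  have "prime_pi N = card P1 + card P2"
    unfolding prime_pi_def P_def[symmetric] PU(1) using fin PU by (simp add: card_Un_disjoint)
  then have "real (prime_pi N) = real (card P1) + real (card P2)" by simp
  also have "\<dots> \<le> 2 * real N / ln (real N) + 6 * real N / ln (real N)" using c1 c1' c2' by linarith
  also have "\<dots> = 8 * real N / ln (real N)" by (simp add: field_simps)
  finally show ?thesis .
qed


lemma prime_pow_gt: "prime (p::nat) \<Longrightarrow> n < p ^ n"
proof -
  assume "prime p"
  then have "2 \<le> p" by (simp add: prime_ge_2_nat)
  have "n < 2 ^ n" by (rule less_exp)
  also have "\<dots> \<le> p ^ n" using \<open>2 \<le> p\<close> by (simp add: power_mono)
  finally show ?thesis .
qed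

lemma div_Suc_ind: "(q::nat) > 0 \<Longrightarrow> Suc n div q = n div q + (if q dvd Suc n then 1 else 0)"
  by (simp add: div_Suc dvd_eq_mod_eq_0)

lemma card_filter_sum: "finite A \<Longrightarrow> card {x\<in>A. P x} = (\<Sum>x\<in>A. if P x then 1 else 0)"
  by (simp add: sum.inter_filter[symmetric])

lemma mult_count:
  assumes p: "prime (p::nat)" and x: "x > 0"
  shows "multiplicity p x = card {i\<in>{1..x}. p ^ i dvd x}"
proof -
  have nu: "\<not> is_unit p" using p by (auto dest: prime_gt_1_nat)
  have "multiplicity p x \<le> x"
  proof -
    have "p ^ multiplicity p x dvd x" by (rule multiplicity_dvd)
    then have "p ^ multiplicity p x \<le> x" using x by (rule dvd_imp_le)
    moreover have "multiplicity p x < p ^ multiplicity p x" using p by (rule prime_pow_gt)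
    ultimately show ?thesis by simp
  qed
  then have "{i\<in>{1..x}. p ^ i dvd x} = {1..multiplicity p x}"
  proof -
    have iff: "p ^ i dvd x \<longleftrightarrow> i \<le> multiplicity p x" for i
      using power_dvd_iff_le_multiplicity[of x p i] x nu by simp
    show ?thesis
    proof (intro set_eqI iffI)
      fix i assume "i \<in> {i\<in>{1..x}. p ^ i dvd x}"
      then show "i \<in> {1..multiplicity p x}" using iff[of i] by simp
    next
      fix i assume "i \<in> {1..multiplicity p x}"
      then show "i \<in> {i\<in>{1..x}. p ^ i dvd x}" using iff[of i] \<open>multiplicity p x \<le> x\<close> by simp
    qed
  qed
  then show ?thesis by simp
qed

lemma legendre:
  assumes p: "prime (p::nat)"
  shows "multiplicity p (fact n) = (\<Sum>i\<in>{1..n}. n div p ^ i)"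
proof (induction n)
  case 0
  then show ?case by simp
next
  case (Suc n)
  have pe: "prime_elem p" using p by simp
  have "multiplicity p (fact (Suc n) :: nat) = multiplicity p (Suc n * fact n)" by simp
  also have "\<dots> = multiplicity p (Suc n) + multiplicity p (fact n :: nat)"
    by (rule prime_elem_multiplicity_mult_distrib[OF pe]) auto
  also have "multiplicity p (Suc n) = card {i\<in>{1..Suc n}. p ^ i dvd Suc n}"
    using mult_count[OF p, of "Suc n"] by simp
  also have "\<dots> = (\<Sum>i\<in>{1..Suc n}. if p ^ i dvd Suc n then 1 else 0)"
    by (rule card_filter_sum) simp
  also note Suc.IH
  also have "(\<Sum>i\<in>{1..n}. n div p ^ i) = (\<Sum>i\<in>{1..Suc n}. n div p ^ i)"
  proof -
    have "n div p ^ Suc n = 0" using prime_pow_gt[OF p, of "Suc n"] by simp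
    then show ?thesis by simp
  qed
  also have "(\<Sum>i\<in>{1..Suc n}. if p ^ i dvd Suc n then 1 else 0) + (\<Sum>i\<in>{1..Suc n}. n div p ^ i)
      = (\<Sum>i\<in>{1..Suc n}. Suc n div p ^ i)"
    unfolding sum.distrib[symmetric]
    by (intro sum.cong refl) (simp add: div_Suc_ind p prime_gt_0_nat)
  finally show ?case .
qed


lemma mult_central_binom_le:
  assumes p: "prime (p::nat)" and n: "n \<ge> 1"
  shows "p ^ multiplicity p (2*n choose n) \<le> 2*n"
proof -
  have pe: "prime_elem p" using p by simp
  have fe: "fact (2*n) = fact n * fact n * (2*n choose n)"
    using binomial_fact_lemma[of n "2*n"] by (simp add: mult_2)
  have "multiplicity p (fact (2*n) :: nat) = multiplicity p (fact n :: nat) + multiplicity p (fact n :: nat) + multiplicity p (2*n choose n)"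
    unfolding fe
    by (simp add: prime_elem_multiplicity_mult_distrib[OF pe])
  then have v: "multiplicity p (2*n choose n) = (\<Sum>i\<in>{1..2*n}. 2*n div p ^ i) - 2 * (\<Sum>i\<in>{1..n}. n div p ^ i)"
    unfolding legendre[OF p] by simp
  have ext: "(\<Sum>i\<in>{1..n}. n div p ^ i) = (\<Sum>i\<in>{1..2*n}. n div p ^ i)"
  proof (rule sum.mono_neutral_left)
    show "\<forall>i\<in>{1..2*n} - {1..n}. n div p ^ i = 0"
    proof
      fix i assume "i \<in> {1..2*n} - {1..n}"
      then have "n < i" by auto
      also have "i < p ^ i" using p by (rule prime_pow_gt)
      finally show "n div p ^ i = 0" by simp
    qed
  qed auto
  define S where "S = {i\<in>{1..2*n}. p ^ i \<le> 2*n}"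
  have v2: "multiplicity p (2*n choose n) = (\<Sum>i\<in>{1..2*n}. 2*n div p ^ i - 2 * (n div p ^ i))"
  proof -
    have le: "2 * (n div p ^ i) \<le> 2*n div p ^ i" for i
    proof -
      have q: "p ^ i > 0" using p by (simp add: prime_gt_0_nat)
      have "2 * (n div p ^ i) = (2 * (n div p ^ i) * p ^ i) div p ^ i" using q by simp
      also have "\<dots> \<le> 2*n div p ^ i"
      proof (intro div_le_mono)
        have "n div p ^ i * p ^ i \<le> n" by (rule div_times_less_eq_dividend)
        then show "2 * (n div p ^ i) * p ^ i \<le> 2*n" by simp
      qed
      finally show ?thesis .
    qed
    have "(\<Sum>i\<in>{1..2*n}. 2*n div p ^ i - 2 * (n div p ^ i)) + 2 * (\<Sum>i\<in>{1..2*n}. n div p ^ i)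
        = (\<Sum>i\<in>{1..2*n}. 2*n div p ^ i)"
      unfolding sum_distrib_left sum.distrib[symmetric] using le by (intro sum.cong) auto
    then show ?thesis unfolding v ext by linarith
  qed
  have "multiplicity p (2*n choose n) \<le> (\<Sum>i\<in>{1..2*n}. if i \<in> S then 1 else 0)"
    unfolding v2
  proof (intro sum_mono)
    fix i assume i: "i \<in> {1..2*n}"
    show "2*n div p ^ i - 2 * (n div p ^ i) \<le> (if i \<in> S then 1 else 0)"
    proof (cases "i \<in> S")
      case True
      have "2*n div p ^ i < 2 * (n div p ^ i) + 2"
      proof -
        have q: "p ^ i > 0" using p by (simp add: prime_gt_0_nat)
        have "2*n < p ^ i * (2 * (n div p ^ i) + 2)"
        proof -
          have e1: "p ^ i * (n div p ^ i) + n mod p ^ i = n" by (rule mult_div_mod_eq)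
          have e2: "n mod p ^ i < p ^ i" using q by (rule mod_less_divisor)
          have "n < p ^ i * (n div p ^ i) + p ^ i" using e1 e2 by linarith
          then show ?thesis by (simp add: algebra_simps)
        qed
        then show ?thesis using div_less_iff_less_mult[OF q, of "2*n" "2 * (n div p ^ i) + 2"]
          by (simp add: mult.commute)
      qed
      then show ?thesis using True by simp
    next
      case False
      then have "2*n < p ^ i" using i unfolding S_def by auto
      then show ?thesis by simp
    qed
  qed
  also have "\<dots> = card S" unfolding S_def by (simp add: sum.inter_filter[symmetric])
  finally have vS: "multiplicity p (2*n choose n) \<le> card S" .
  show ?thesis
  proof (cases "S = {}")
    case True
    then show ?thesis using vS n by simp
  next
    case False
    have fS: "finite S" unfolding S_def by simp
    define L where "L = Max S"
    have LS: "L \<in> S" unfolding L_def using fS False by simp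
    have "S \<subseteq> {1..L}" unfolding L_def using fS by (auto simp: S_def)
    then have "card S \<le> L" using card_mono[of "{1..L}" S] by simp
    then have "p ^ multiplicity p (2*n choose n) \<le> p ^ L"
      using vS p by (intro power_increasing) (auto simp: Suc_le_eq dest: prime_gt_0_nat)
    also have "p ^ L \<le> 2*n" using LS unfolding S_def by simp
    finally show ?thesis .
  qed
qed

lemma central_binom_le_pi:
  assumes n: "n \<ge> 1"
  shows "(2*n choose n) \<le> (2*n) ^ prime_pi (2*n)"
proof -
  define C where "C = (2*n choose n)"
  have C0: "C > 0" unfolding C_def by simp
  have "C = (\<Prod>p\<in>prime_factors C. p ^ multiplicity p C)" using C0 by (rule prime_factorization_nat)
  also have "\<dots> \<le> (\<Prod>p\<in>prime_factors C. 2*n)"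
  proof (intro prod_mono conjI)
    fix p assume "p \<in> prime_factors C"
    then have "prime p" by (rule in_prime_factors_imp_prime)
    show "p ^ multiplicity p C \<le> 2*n" unfolding C_def by (rule mult_central_binom_le[OF \<open>prime p\<close> n])
  qed simp
  also have "\<dots> = (2*n) ^ card (prime_factors C)" by simp
  also have "\<dots> \<le> (2*n) ^ prime_pi (2*n)"
  proof (intro power_increasing)
    have "prime_factors C \<subseteq> {p. prime p \<and> p \<le> 2*n}"
    proof
      fix p assume "p \<in> prime_factors C"
      then have pp: "prime p" and "p dvd C" by (auto dest: in_prime_factors_imp_prime in_prime_factors_imp_dvd)
      have "C dvd fact n * fact (2*n-n) * C" by simp
      also have "fact n * fact (2*n-n) * C = (fact (2*n) :: nat)" unfolding C_def by (rule binomial_fact_lemma) simp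
      finally have "p dvd fact (2*n)" using \<open>p dvd C\<close> by (rule dvd_trans[rotated])
      then have "p \<le> 2*n" using prime_dvd_fact_iff[OF pp] by simp
      then show "p \<in> {p. prime p \<and> p \<le> 2*n}" using pp by simp
    qed
    then show "card (prime_factors C) \<le> prime_pi (2*n)"
      unfolding prime_pi_def by (intro card_mono) auto
  qed (use n in auto)
  finally show ?thesis unfolding C_def .
qed


lemma prime_pi_mono: "M \<le> N \<Longrightarrow> prime_pi M \<le> prime_pi N"
  unfolding prime_pi_def by (intro card_mono) auto

lemma prime_pi_lower:
  assumes N: "N \<ge> 2"
  shows "real (prime_pi N) \<ge> ln 2 / 4 * real N / ln (real N)"
proof -
  define n where "n = N div 2"
  have n1: "n \<ge> 1" using N unfolding n_def by simp
  have n2: "2 * n \<le> N" unfolding n_def by simp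
  have nN: "real N \<le> 4 * real n"
  proof -
    have "N \<le> 2 * n + 1" unfolding n_def by simp
    then have "real N \<le> 2 * real n + 1" by linarith
    then show ?thesis using n1 by simp
  qed
  have "(real (2*n) / real n) ^ n \<le> real (2*n choose n)"
    by (rule binomial_ge_n_over_k_pow_k) simp
  then have "2 ^ n \<le> real (2*n choose n)" using n1 by simp
  also have "\<dots> \<le> real ((2*n) ^ prime_pi (2*n))"
    using central_binom_le_pi[OF n1] by (simp only: of_nat_le_iff)
  also have "\<dots> = real (2*n) ^ prime_pi (2*n)" by simp
  finally have b: "(2::real) ^ n \<le> real (2*n) ^ prime_pi (2*n)" .
  have "real n * ln 2 = ln ((2::real) ^ n)" by (simp add: ln_realpow)
  also have "\<dots> \<le> ln (real (2*n) ^ prime_pi (2*n))" using b n1 by (subst ln_le_cancel_iff) auto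
  also have "\<dots> = real (prime_pi (2*n)) * ln (real (2*n))"
    using n1 by (intro ln_realpow)
  also have "\<dots> \<le> real (prime_pi N) * ln (real N)"
  proof (intro mult_mono)
    show "real (prime_pi (2*n)) \<le> real (prime_pi N)" using prime_pi_mono[OF n2] by simp
    show "ln (real (2*n)) \<le> ln (real N)" using n1 n2 by simp
    show "0 \<le> ln (real (2*n))" using n1 by simp
  qed simp
  finally have "real n * ln 2 \<le> real (prime_pi N) * ln (real N)" .
  moreover have "ln 2 / 4 * real N \<le> real n * ln 2" using nN by simp
  ultimately have "ln 2 / 4 * real N \<le> real (prime_pi N) * ln (real N)" by linarith
  moreover have "ln (real N) > 0" using N by simp
  ultimately show ?thesis by (simp add: field_simps)
qed


definition SM :: "nat \<Rightarrow> nat \<Rightarrow> nat set" where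
  "SM N j = {m. 0 < m \<and> m \<le> N ^ j \<and> (\<forall>p. prime p \<longrightarrow> p dvd m \<longrightarrow> p \<le> N)}"

lemma finite_SM: "finite (SM N j)"
  unfolding SM_def by (rule finite_subset[of _ "{..N^j}"]) auto

lemma mult_le_self:
  assumes p: "prime (p::nat)" and x: "x > 0"
  shows "multiplicity p x \<le> x"
proof -
  have "p ^ multiplicity p x dvd x" by (rule multiplicity_dvd)
  then have "p ^ multiplicity p x \<le> x" using x by (rule dvd_imp_le)
  moreover have "multiplicity p x < p ^ multiplicity p x" using p by (rule prime_pow_gt)
  ultimately show ?thesis by simp
qed

lemma SM_factor:
  assumes m: "m \<in> SM N j"
  shows "m = (\<Prod>p\<in>{p. prime p \<and> p \<le> N}. p ^ multiplicity p m)"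
proof -
  have m0: "m > 0" using m unfolding SM_def by simp
  have "m = (\<Prod>p\<in>prime_factors m. p ^ multiplicity p m)" using m0 by (rule prime_factorization_nat)
  also have "\<dots> = (\<Prod>p\<in>{p. prime p \<and> p \<le> N}. p ^ multiplicity p m)"
  proof (rule prod.mono_neutral_left)
    show "finite {p. prime p \<and> p \<le> N}" by simp
    show "prime_factors m \<subseteq> {p. prime p \<and> p \<le> N}"
    proof
      fix p assume "p \<in> prime_factors m"
      then have "prime p" "p dvd m" by (auto dest: in_prime_factors_imp_prime in_prime_factors_imp_dvd)
      then show "p \<in> {p. prime p \<and> p \<le> N}" using m unfolding SM_def by auto
    qed
    show "\<forall>p\<in>{p. prime p \<and> p \<le> N} - prime_factors m. p ^ multiplicity p m = 1"
    proof
      fix p assume "p \<in> {p. prime p \<and> p \<le> N} - prime_factors m"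
      then have "prime p" "p \<notin> prime_factors m" by auto
      then have "\<not> p dvd m" using m0 by (auto simp: in_prime_factors_iff)
      then show "p ^ multiplicity p m = 1" by (simp add: not_dvd_imp_multiplicity_0)
    qed
  qed
  finally show ?thesis .
qed

lemma geom_le: "0 \<le> (x::real) \<Longrightarrow> x < 1 \<Longrightarrow> (\<Sum>a\<le>B. x ^ a) \<le> 1 / (1 - x)"
proof -
  assume x: "0 \<le> x" "x < 1"
  have "(\<Sum>a\<le>B. x ^ a) = (\<Sum>a<Suc B. x ^ a)" by (simp only: lessThan_Suc_atMost)
  also have "\<dots> = (1 - x ^ Suc B) / (1 - x)" using x by (subst sum_gp_strict) auto
  also have "\<dots> \<le> 1 / (1 - x)" using x by (intro divide_right_mono) auto
  finally show ?thesis .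
qed

lemma inv_one_minus_exp: "(u::real) > 0 \<Longrightarrow> 1 / (1 - exp (- u)) \<le> 1 + 1 / u"
proof -
  assume u: "u > 0"
  have eu: "exp u - 1 \<ge> u" using exp_ge_add_one_self[of u] by linarith
  have "1 / (1 - exp (- u)) = exp u / (exp u - 1)"
    using u by (simp add: exp_minus field_simps)
  also have "\<dots> = 1 + 1 / (exp u - 1)" using eu u by (simp add: field_simps)
  also have "\<dots> \<le> 1 + 1 / u" using eu u by (simp add: frac_le)
  finally show ?thesis .
qed

lemma ln_le_4root: "(x::real) > 0 \<Longrightarrow> ln x \<le> 4 * x powr (1/4)"
proof -
  assume x: "x > 0"
  have "ln x = 4 * ln (x powr (1/4))" using x by (simp add: ln_powr)
  also have "\<dots> \<le> 4 * (x powr (1/4) - 1)" using x by (intro mult_left_mono ln_le_minus_one) auto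
  finally show ?thesis by simp
qed

lemma lnsq_le: "(x::real) \<ge> 1 \<Longrightarrow> (ln x)^2 \<le> 16 * sqrt x"
proof -
  assume x: "x \<ge> 1"
  have l: "ln x \<le> 4 * x powr (1/4)" using x by (intro ln_le_4root) simp
  have "(ln x)^2 \<le> (4 * x powr (1/4))^2" using l x by (intro power_mono) auto
  also have "\<dots> = 16 * (x powr (1/4))^2" by (simp add: power_mult_distrib)
  also have "(x powr (1/4))^2 = x powr (1/2)" using x by (simp add: powr_realpow[symmetric] powr_powr)
  also have "x powr (1/2) = sqrt x" using x by (simp add: powr_half_sqrt)
  finally show ?thesis .
qed


lemma card_SM:
  assumes N: "N \<ge> 2" and j: "prime_pi N \<le> j"
  shows "real (card (SM N j)) \<le> exp (259 * real j)"
proof -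
  define P where "P = {p::nat. prime p \<and> p \<le> N}"
  define L where "L = ln (real N)"
  define s where "s = 1 / L"
  define x where "x p = exp (- (s * ln (real p)))" for p :: nat
  have L0: "L > 0" using N unfolding L_def by simp
  have s0: "s > 0" using L0 unfolding s_def by simp
  have finP: "finite P" unfolding P_def by simp
  have Ppos: "p \<in> P \<Longrightarrow> real p > 1" for p unfolding P_def by (auto dest: prime_gt_1_nat)
  have lnp: "p \<in> P \<Longrightarrow> ln (real p) > 0" for p using Ppos[of p] by simp
  have xp: "p \<in> P \<Longrightarrow> 0 \<le> x p \<and> x p < 1" for p
    using lnp[of p] s0 unfolding x_def by auto
  have w: "exp (- (s * ln (real m))) = (\<Prod>p\<in>P. x p ^ multiplicity p m)" if m: "m \<in> SM N j" for m
  proof -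
    have "real m = real (\<Prod>p\<in>P. p ^ multiplicity p m)" using SM_factor[OF m] unfolding P_def by simp
    also have "\<dots> = (\<Prod>p\<in>P. real p ^ multiplicity p m)" by simp
    finally have "ln (real m) = ln (\<Prod>p\<in>P. real p ^ multiplicity p m)" by simp
    also have "\<dots> = (\<Sum>p\<in>P. ln (real p ^ multiplicity p m))"
      using finP by (intro ln_prod) (auto simp: P_def prime_gt_0_nat)
    also have "\<dots> = (\<Sum>p\<in>P. real (multiplicity p m) * ln (real p))"
      using Ppos by (intro sum.cong refl ln_realpow)
    finally have "exp (- (s * ln (real m))) = exp (\<Sum>p\<in>P. real (multiplicity p m) * (- (s * ln (real p))))"
      by (simp add: sum_distrib_left sum_negf algebra_simps)
    also have "\<dots> = (\<Prod>p\<in>P. exp (real (multiplicity p m) * (- (s * ln (real p)))))"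
      using finP by (rule exp_sum)
    also have "\<dots> = (\<Prod>p\<in>P. x p ^ multiplicity p m)"
      unfolding x_def by (simp only: exp_of_nat_mult)
    finally show ?thesis .
  qed
  have one_le: "1 \<le> exp (real j) * exp (- (s * ln (real m)))" if m: "m \<in> SM N j" for m
  proof -
    have m0: "m > 0" and mle: "m \<le> N ^ j" using m unfolding SM_def by auto
    have "real m \<le> real N ^ j" using mle by (metis of_nat_le_iff of_nat_power)
    then have "ln (real m) \<le> ln (real N ^ j)" using m0 N by (intro ln_le_cancel_iff[THEN iffD2]) auto
    also have "\<dots> = real j * L" unfolding L_def using N by (simp add: ln_realpow)
    finally have "s * ln (real m) \<le> s * (real j * L)" using s0 by (intro mult_left_mono) auto
    also have "\<dots> = real j" unfolding s_def using L0 by simp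
    finally have "0 \<le> real j + - (s * ln (real m))" by simp
    then have "1 \<le> exp (real j + - (s * ln (real m)))" by simp
    also have "\<dots> = exp (real j) * exp (- (s * ln (real m)))" by (rule exp_add)
    finally show ?thesis .
  qed
  define h where "h m = restrict (\<lambda>p. multiplicity p m) P" for m
  have inj: "inj_on h (SM N j)"
  proof (rule inj_onI)
    fix m m' assume m: "m \<in> SM N j" and m': "m' \<in> SM N j" and e: "h m = h m'"
    have "\<forall>p\<in>P. multiplicity p m = multiplicity p m'"
    proof
      fix p assume "p \<in> P"
      then show "multiplicity p m = multiplicity p m'" using fun_cong[OF e, of p] unfolding h_def by simp
    qed
    then have "(\<Prod>p\<in>P. p ^ multiplicity p m) = (\<Prod>p\<in>P. p ^ multiplicity p m')"
      by (intro prod.cong) auto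
    then show "m = m'" using SM_factor[OF m] SM_factor[OF m'] unfolding P_def by simp
  qed
  have himg: "h ` SM N j \<subseteq> PiE P (\<lambda>_. {..N^j})"
  proof
    fix a assume "a \<in> h ` SM N j"
    then obtain m where m: "m \<in> SM N j" and a: "a = h m" by auto
    have "\<forall>p\<in>P. multiplicity p m \<in> {..N^j}"
    proof
      fix p assume "p \<in> P"
      then have "multiplicity p m \<le> m" using m by (intro mult_le_self) (auto simp: P_def SM_def)
      also have "m \<le> N^j" using m by (simp add: SM_def)
      finally show "multiplicity p m \<in> {..N^j}" by simp
    qed
    then show "a \<in> PiE P (\<lambda>_. {..N^j})" unfolding a h_def by (simp add: restrict_PiE_iff)
  qed
  have "real (card (SM N j)) = (\<Sum>m\<in>SM N j. 1)" by simp
  also have "\<dots> \<le> (\<Sum>m\<in>SM N j. exp (real j) * exp (- (s * ln (real m))))"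
    by (intro sum_mono one_le)
  also have "\<dots> = exp (real j) * (\<Sum>m\<in>SM N j. (\<Prod>p\<in>P. x p ^ multiplicity p m))"
    by (simp add: sum_distrib_left w)
  also have "(\<Sum>m\<in>SM N j. (\<Prod>p\<in>P. x p ^ multiplicity p m)) = (\<Sum>m\<in>SM N j. (\<Prod>p\<in>P. x p ^ h m p))"
    unfolding h_def by (intro sum.cong prod.cong) auto
  also have "\<dots> = (\<Sum>a\<in>h ` SM N j. (\<Prod>p\<in>P. x p ^ a p))"
    using sum.reindex[OF inj, of "\<lambda>a. \<Prod>p\<in>P. x p ^ a p"] by simp
  also have "\<dots> \<le> (\<Sum>a\<in>PiE P (\<lambda>_. {..N^j}). (\<Prod>p\<in>P. x p ^ a p))"
    using himg xp finP by (intro sum_mono2 finite_PiE prod_nonneg) auto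
  also have "\<dots> = (\<Prod>p\<in>P. (\<Sum>a\<in>{..N^j}. x p ^ a))"
    using finP by (subst prod_sum_PiE) auto
  also have "\<dots> \<le> (\<Prod>p\<in>P. 1 + L / ln (real p))"
  proof (intro prod_mono conjI)
    fix p assume p: "p \<in> P"
    show "0 \<le> (\<Sum>a\<in>{..N^j}. x p ^ a)" using xp[OF p] by (intro sum_nonneg) auto
    have "(\<Sum>a\<in>{..N^j}. x p ^ a) \<le> 1 / (1 - x p)" using xp[OF p] by (intro geom_le) auto
    also have "\<dots> \<le> 1 + 1 / (s * ln (real p))"
      unfolding x_def using s0 lnp[OF p] by (intro inv_one_minus_exp) auto
    also have "\<dots> = 1 + L / ln (real p)" unfolding s_def using L0 lnp[OF p] by simp
    finally show "(\<Sum>a\<in>{..N^j}. x p ^ a) \<le> 1 + L / ln (real p)" .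
  qed
  also have "\<dots> \<le> (\<Prod>p\<in>P. if p * p \<le> N then 1 + L / ln 2 else 3)"
  proof (intro prod_mono conjI)
    fix p assume p: "p \<in> P"
    show "0 \<le> 1 + L / ln (real p)" using L0 lnp[OF p] by simp
    show "1 + L / ln (real p) \<le> (if p * p \<le> N then 1 + L / ln 2 else 3)"
    proof (cases "p * p \<le> N")
      case True
      have "ln 2 \<le> ln (real p)" using p by (auto simp: P_def dest: prime_ge_2_nat)
      then have "L / ln (real p) \<le> L / ln 2" using L0 lnp[OF p] by (intro divide_left_mono) auto
      then show ?thesis using True by simp
    next
      case False
      then have "real N < real p * real p" by (metis not_le of_nat_less_iff of_nat_mult)
      then have "L < ln (real p * real p)" unfolding L_def using N by (intro ln_less_cancel_iff[THEN iffD2]) auto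
      also have "\<dots> = 2 * ln (real p)" using Ppos[OF p] by (simp add: ln_mult)
      finally have "L / ln (real p) < 2" using lnp[OF p] by (simp add: divide_less_eq)
      then show ?thesis using False by simp
    qed
  qed
  also have "\<dots> = (1 + L / ln 2) ^ card (P \<inter> {p. p * p \<le> N}) * 3 ^ card (P \<inter> - {p. p * p \<le> N})"
    using finP by (simp add: prod.If_cases)
  finally have main: "real (card (SM N j)) \<le> exp (real j) *
      ((1 + L / ln 2) ^ card (P \<inter> {p. p * p \<le> N}) * 3 ^ card (P \<inter> - {p. p * p \<le> N}))"
    by simp
  define A where "A = 1 + L / ln 2"
  have A1: "A \<ge> 1" unfolding A_def using L0 by simp
  have c1: "real (card (P \<inter> {p. p * p \<le> N})) \<le> sqrt (real N)"
  proof -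
    have "P \<inter> {p. p * p \<le> N} = {p::nat. prime p \<and> p \<le> N \<and> p * p \<le> N}" unfolding P_def by auto
    then show ?thesis using card_small_primes by simp
  qed
  have c2: "card (P \<inter> - {p. p * p \<le> N}) \<le> j"
  proof -
    have "card (P \<inter> - {p. p * p \<le> N}) \<le> card P" using finP by (intro card_mono) auto
    also have "card P = prime_pi N" unfolding P_def prime_pi_def by simp
    finally show ?thesis using j by simp
  qed
  have lnA: "ln A \<le> 2 * L"
  proof -
    have "ln A \<le> A - 1" using A1 by (intro ln_le_minus_one) auto
    also have "\<dots> = L / ln 2" unfolding A_def by simp
    also have "\<dots> \<le> L / (1/2)" using L0 ln2_ge_two_thirds by (intro divide_left_mono) auto
    finally show ?thesis by simp
  qed
  have key: "sqrt (real N) * ln A \<le> 256 * real j"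
  proof -
    have pl: "real (prime_pi N) \<ge> ln 2 / 4 * real N / L" unfolding L_def using prime_pi_lower[OF N] .
    have "ln 2 / 4 * real N / L \<ge> real N / (8 * L)"
      using ln2_ge_two_thirds L0 N by (simp add: field_simps)
    then have pl2: "real N / (8 * L) \<le> real j" using pl j by linarith
    have "sqrt (real N) * ln A \<le> sqrt (real N) * (2 * L)" using lnA by (intro mult_left_mono) auto
    also have "\<dots> \<le> 32 * real N / L"
    proof -
      have "L^2 \<le> 16 * sqrt (real N)" unfolding L_def using N by (intro lnsq_le) simp
      then have "sqrt (real N) * L^2 \<le> sqrt (real N) * (16 * sqrt (real N))" by (intro mult_left_mono) auto
      also have "\<dots> = 16 * real N" by simp
      finally have "sqrt (real N) * (2 * L) * L \<le> 32 * real N" by (simp add: power2_eq_square algebra_simps)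
      then show ?thesis using L0 by (simp add: field_simps)
    qed
    also have "\<dots> = 256 * (real N / (8 * L))" by simp
    also have "\<dots> \<le> 256 * real j" using pl2 by simp
    finally show ?thesis .
  qed
  have "A ^ card (P \<inter> {p. p * p \<le> N}) = exp (real (card (P \<inter> {p. p * p \<le> N})) * ln A)"
    using A1 by (simp add: exp_of_nat_mult)
  also have "\<dots> \<le> exp (sqrt (real N) * ln A)" using c1 A1 by (intro exp_le_cancel_iff[THEN iffD2] mult_right_mono) auto
  also have "\<dots> \<le> exp (256 * real j)" using key by simp
  finally have t1: "A ^ card (P \<inter> {p. p * p \<le> N}) \<le> exp (256 * real j)" .
  have "(3::real) ^ card (P \<inter> - {p. p * p \<le> N}) \<le> 3 ^ j" using c2 by (intro power_increasing) auto
  also have "\<dots> \<le> exp 2 ^ j"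
  proof (intro power_mono)
    show "(3::real) \<le> exp 2" using exp_ge_add_one_self[of 2] by simp
  qed auto
  also have "\<dots> = exp (2 * real j)" by (simp add: exp_of_nat_mult[symmetric] mult.commute)
  finally have t2: "(3::real) ^ card (P \<inter> - {p. p * p \<le> N}) \<le> exp (2 * real j)" .
  have "exp (real j) * (A ^ card (P \<inter> {p. p * p \<le> N}) * 3 ^ card (P \<inter> - {p. p * p \<le> N}))
      \<le> exp (real j) * (exp (256 * real j) * exp (2 * real j))"
    using A1 by (intro mult_left_mono mult_mono t1 t2) auto
  then have "real (card (SM N j)) \<le> exp (real j) * (exp (256 * real j) * exp (2 * real j))"
    using main unfolding A_def by linarith
  also have "\<dots> = exp (259 * real j)" by (simp add: exp_add[symmetric])
  finally show ?thesis .
qed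


definition ee :: "real \<Rightarrow> real \<Rightarrow> complex" where
  "ee l t = exp (\<i> * complex_of_real (l * t))"

definition Iee :: "real \<Rightarrow> real \<Rightarrow> complex" where
  "Iee l T = (if l = 0 then complex_of_real T else (ee l T - 1) / (\<i> * complex_of_real l))"

lemma ee_mult: "ee a t * ee b t = ee (a + b) t"
  unfolding ee_def by (simp add: exp_add[symmetric] algebra_simps)

lemma ee_cnj: "cnj (ee a t) = ee (- a) t"
  unfolding ee_def by (simp add: exp_cnj)

lemma norm_ee [simp]: "norm (ee a t) = 1"
  unfolding ee_def by (simp add: norm_exp_eq_Re)

lemma ee_zero [simp]: "ee 0 t = 1"
  unfolding ee_def by simp

lemma continuous_ee: "continuous_on A (ee l)"
  unfolding ee_def by (intro continuous_intros)

lemma ee_has_integral: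
  assumes T: "T \<ge> 0"
  shows "(ee l has_integral Iee l T) {0..T}"
proof (cases "l = 0")
  case True
  have e: "ee l = (\<lambda>_. 1)" using True by (intro ext) simp
  show ?thesis using has_integral_const_real[of "1::complex" 0 T] T True unfolding e
    by (simp add: Iee_def scaleR_conv_of_real)
next
  case False
  define c where "c = 1 / (\<i> * complex_of_real l)"
  define F where "F z = c * exp (\<i> * (complex_of_real l * z))" for z
  have d: "(F has_field_derivative exp (\<i> * (complex_of_real l * z))) (at z)" for z
  proof -
    have "(F has_field_derivative c * (exp (\<i> * (complex_of_real l * z)) * (\<i> * complex_of_real l))) (at z)"
      unfolding F_def by (auto intro!: derivative_eq_intros)
    moreover have "c * (exp (\<i> * (complex_of_real l * z)) * (\<i> * complex_of_real l)) = exp (\<i> * (complex_of_real l * z))"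
      using False unfolding c_def by (simp add: field_simps)
    ultimately show ?thesis by simp
  qed
  have "(ee l has_integral (F (of_real T) - F (of_real 0))) {0..T}"
  proof (rule fundamental_theorem_of_calculus[OF T])
    fix x assume "x \<in> {0..T}"
    have "((\<lambda>x. F (of_real x)) has_vector_derivative exp (\<i> * (complex_of_real l * of_real x))) (at x within {0..T})"
      by (rule has_vector_derivative_real_field[OF d])
    then show "((\<lambda>x. F (of_real x)) has_vector_derivative ee l x) (at x within {0..T})"
      unfolding ee_def by simp
  qed
  also have "F (of_real T) - F (of_real 0) = Iee l T"
    unfolding F_def Iee_def ee_def c_def using False by (simp add: field_simps)
  finally show ?thesis .
qed

lemma norm_Iee_le: "l \<noteq> 0 \<Longrightarrow> norm (Iee l T) \<le> 2 / \<bar>l\<bar>"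
proof -
  assume l: "l \<noteq> 0"
  have "norm (ee l T - 1) \<le> norm (ee l T) + norm (1::complex)" by (rule norm_triangle_ineq4)
  then have n: "norm (ee l T - 1) \<le> 2" by simp
  have "norm (Iee l T) = norm (ee l T - 1) / \<bar>l\<bar>"
    using l by (simp add: Iee_def norm_divide norm_mult)
  also have "\<dots> \<le> 2 / \<bar>l\<bar>" using n l by (simp add: divide_right_mono)
  finally show ?thesis .
qed

lemma mean_Iee: "((\<lambda>T. Iee l T / complex_of_real T) \<longlongrightarrow> (if l = 0 then 1 else 0)) at_top"
proof (cases "l = 0")
  case True
  have "\<forall>\<^sub>F T in at_top. Iee l T / complex_of_real T = 1"
    using eventually_gt_at_top[of "0::real"] by eventually_elim (simp add: Iee_def True)
  then show ?thesis using True by (simp add: tendsto_eventually)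
next
  case False
  have "((\<lambda>T. Iee l T / complex_of_real T) \<longlongrightarrow> 0) at_top"
  proof (rule Lim_null_comparison)
    show "\<forall>\<^sub>F T in at_top. norm (Iee l T / complex_of_real T) \<le> 2 / \<bar>l\<bar> / T"
      using eventually_gt_at_top[of "0::real"]
    proof eventually_elim
      case (elim T)
      have "norm (Iee l T / complex_of_real T) = norm (Iee l T) / T" using elim by (simp add: norm_divide)
      also have "\<dots> \<le> 2 / \<bar>l\<bar> / T" by (rule divide_right_mono[OF norm_Iee_le[OF False]]) (use elim in simp)
      finally show ?case .
    qed
    show "((\<lambda>T. 2 / \<bar>l\<bar> / T) \<longlongrightarrow> 0) at_top"
      by (intro tendsto_divide_0[OF tendsto_const] filterlim_at_top_imp_at_infinity[OF filterlim_ident])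
  qed
  then show ?thesis using False by simp
qed

definition dpoly :: "(nat \<Rightarrow> complex) \<Rightarrow> nat set \<Rightarrow> real \<Rightarrow> complex" where
  "dpoly c S t = (\<Sum>m\<in>S. c m * exp (- \<i> * complex_of_real (t * ln (real m))))"

lemma dirichlet_dpoly: "dirichlet_poly_it a N t = dpoly a {1..N} t"
  unfolding dirichlet_poly_it_def dpoly_def by simp

lemma dpoly_ee: "dpoly c S t = (\<Sum>m\<in>S. c m * ee (- ln (real m)) t)"
  unfolding dpoly_def ee_def by (intro sum.cong refl) (simp add: algebra_simps)

lemma continuous_dpoly: "continuous_on A (dpoly c S)"
  unfolding dpoly_ee by (intro continuous_intros continuous_on_mult_left continuous_ee)

lemma norm_dpoly_sq:
  "complex_of_real ((cmod (dpoly c S t))^2) =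
     (\<Sum>m\<in>S. \<Sum>m'\<in>S. (c m * cnj (c m')) * ee (ln (real m') - ln (real m)) t)"
proof -
  have "complex_of_real ((cmod (dpoly c S t))^2) = dpoly c S t * cnj (dpoly c S t)"
    by (rule complex_norm_square)
  also have "\<dots> = (\<Sum>m\<in>S. c m * ee (- ln (real m)) t) * (\<Sum>m'\<in>S. cnj (c m') * ee (ln (real m')) t)"
    unfolding dpoly_ee cnj_sum by (simp add: ee_cnj)
  also have "\<dots> = (\<Sum>m\<in>S. \<Sum>m'\<in>S. (c m * ee (- ln (real m)) t) * (cnj (c m') * ee (ln (real m')) t))"
    by (rule sum_product)
  also have "\<dots> = (\<Sum>m\<in>S. \<Sum>m'\<in>S. (c m * cnj (c m')) * ee (ln (real m') - ln (real m)) t)"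
  proof (intro sum.cong refl)
    fix m m'
    have "ee (- ln (real m)) t * ee (ln (real m')) t = ee (ln (real m') - ln (real m)) t"
      by (simp add: ee_mult)
    then show "(c m * ee (- ln (real m)) t) * (cnj (c m') * ee (ln (real m')) t) =
          (c m * cnj (c m')) * ee (ln (real m') - ln (real m)) t"
      by (metis (no_types, lifting) mult.assoc mult.left_commute)
  qed
  finally show ?thesis .
qed

lemma parseval:
  assumes fin: "finite S" and pos: "\<And>m. m \<in> S \<Longrightarrow> m > 0"
  shows "((\<lambda>T. (1 / T) * integral {0..T} (\<lambda>t. (cmod (dpoly c S t))^2)) \<longlongrightarrow>
           (\<Sum>m\<in>S. (cmod (c m))^2)) at_top"
proof -
  define J where "J T = (\<Sum>m\<in>S. \<Sum>m'\<in>S. (c m * cnj (c m')) * Iee (ln (real m') - ln (real m)) T)" for T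
  have hi: "((\<lambda>t. complex_of_real ((cmod (dpoly c S t))^2)) has_integral J T) {0..T}" if T: "T \<ge> 0" for T
    unfolding norm_dpoly_sq J_def
    by (intro has_integral_sum fin ballI has_integral_mult_right ee_has_integral T)
  have ri: "integral {0..T} (\<lambda>t. (cmod (dpoly c S t))^2) = Re (J T)" if T: "T \<ge> 0" for T
  proof -
    have "((Re \<circ> (\<lambda>t. complex_of_real ((cmod (dpoly c S t))^2))) has_integral Re (J T)) {0..T}"
      by (intro has_integral_linear[OF hi[OF T]] bounded_linear_Re)
    then have "((\<lambda>t. (cmod (dpoly c S t))^2) has_integral Re (J T)) {0..T}" by (simp add: o_def)
    then show ?thesis by (rule integral_unique)
  qed
  have lim: "((\<lambda>T. J T / complex_of_real T) \<longlongrightarrow>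
      (\<Sum>m\<in>S. \<Sum>m'\<in>S. (c m * cnj (c m')) * (if ln (real m') - ln (real m) = 0 then 1 else 0))) at_top"
    unfolding J_def sum_divide_distrib mult.assoc times_divide_eq_right[symmetric]
    by (intro tendsto_sum tendsto_mult_left mean_Iee)
  have "(\<Sum>m\<in>S. \<Sum>m'\<in>S. (c m * cnj (c m')) * (if ln (real m') - ln (real m) = 0 then 1 else 0))
      = (\<Sum>m\<in>S. \<Sum>m'\<in>S. (if m' = m then c m * cnj (c m') else 0))"
  proof (intro sum.cong refl)
    fix m m' assume "m \<in> S" "m' \<in> S"
    then have "m > 0" "m' > 0" using pos by auto
    then have "(ln (real m') - ln (real m) = 0) = (m' = m)" by simp
    then show "(c m * cnj (c m')) * (if ln (real m') - ln (real m) = 0 then 1 else 0) =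
        (if m' = m then c m * cnj (c m') else 0)" by simp
  qed
  also have "\<dots> = (\<Sum>m\<in>S. c m * cnj (c m))"
    using fin by (simp add: sum.delta)
  also have "\<dots> = (\<Sum>m\<in>S. complex_of_real ((cmod (c m))^2))"
    by (intro sum.cong refl) (rule complex_norm_square[symmetric])
  also have "\<dots> = complex_of_real (\<Sum>m\<in>S. (cmod (c m))^2)" by simp
  finally have lim2: "((\<lambda>T. J T / complex_of_real T) \<longlongrightarrow> complex_of_real (\<Sum>m\<in>S. (cmod (c m))^2)) at_top"
    using lim by simp
  have "((\<lambda>T. Re (J T / complex_of_real T)) \<longlongrightarrow> Re (complex_of_real (\<Sum>m\<in>S. (cmod (c m))^2))) at_top"
    by (intro tendsto_Re lim2)
  then have l3: "((\<lambda>T. Re (J T) / T) \<longlongrightarrow> (\<Sum>m\<in>S. (cmod (c m))^2)) at_top"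
    by (simp add: Re_divide_of_real)
  show ?thesis
  proof (rule Lim_transform_eventually[OF l3])
    show "\<forall>\<^sub>F T in at_top. Re (J T) / T = (1 / T) * integral {0..T} (\<lambda>t. (cmod (dpoly c S t))^2)"
      using eventually_ge_at_top[of "0::real"] by eventually_elim (simp add: ri)
  qed
qed


lemma exp_ln_mult:
  assumes "u > 0" "v > 0"
  shows "exp (- \<i> * complex_of_real (t * ln (real u))) * exp (- \<i> * complex_of_real (t * ln (real v)))
       = exp (- \<i> * complex_of_real (t * ln (real (u * v))))"
  using assms by (simp add: exp_add[symmetric] ln_mult algebra_simps)

lemma dpoly_mult:
  assumes fS: "finite S" and fT: "finite T" and pS: "\<And>m. m \<in> S \<Longrightarrow> m > 0" and pT: "\<And>m. m \<in> T \<Longrightarrow> m > 0"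
  shows "dpoly c S t * dpoly d T t =
    dpoly (\<lambda>m. \<Sum>x\<in>{x\<in>S \<times> T. fst x * snd x = m}. c (fst x) * d (snd x)) ((\<lambda>x. fst x * snd x) ` (S \<times> T)) t"
proof -
  define E where "E m = exp (- \<i> * complex_of_real (t * ln (real m)))" for m :: nat
  define g where "g x = fst x * snd x" for x :: "nat \<times> nat"
  have "dpoly c S t * dpoly d T t = (\<Sum>u\<in>S. \<Sum>v\<in>T. (c u * E u) * (d v * E v))"
    unfolding dpoly_def E_def by (rule sum_product)
  also have "\<dots> = (\<Sum>x\<in>S \<times> T. c (fst x) * d (snd x) * E (g x))"
    unfolding sum.cartesian_product
  proof (intro sum.cong refl)
    fix x assume "x \<in> S \<times> T"
    then have "fst x > 0" "snd x > 0" using pS pT by auto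
    then have "E (fst x) * E (snd x) = E (g x)" unfolding E_def g_def by (rule exp_ln_mult)
    then show "(case x of (u, v) \<Rightarrow> c u * E u * (d v * E v)) = c (fst x) * d (snd x) * E (g x)"
      by (cases x) (simp add: algebra_simps)
  qed
  also have "\<dots> = (\<Sum>m\<in>g ` (S \<times> T). \<Sum>x\<in>{x\<in>S \<times> T. g x = m}. c (fst x) * d (snd x) * E (g x))"
    using fS fT by (intro sum.group[symmetric]) auto
  also have "\<dots> = (\<Sum>m\<in>g ` (S \<times> T). (\<Sum>x\<in>{x\<in>S \<times> T. g x = m}. c (fst x) * d (snd x)) * E m)"
    unfolding sum_distrib_right by (intro sum.cong refl) auto
  finally show ?thesis unfolding dpoly_def E_def g_def .
qed

fun Sp :: "nat \<Rightarrow> nat \<Rightarrow> nat set" where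
  "Sp N 0 = {1}"
| "Sp N (Suc j) = (\<lambda>x. fst x * snd x) ` (Sp N j \<times> {1..N})"

lemma finite_Sp: "finite (Sp N j)"
  by (induction j) auto

lemma Sp_prop: "m \<in> Sp N j \<Longrightarrow> 0 < m \<and> m \<le> N ^ j \<and> (\<forall>p. prime p \<longrightarrow> p dvd m \<longrightarrow> p \<le> N)"
proof (induction j arbitrary: m)
  case 0
  then show ?case by (auto dest: prime_gt_1_nat)
next
  case (Suc j)
  then obtain u v where m: "m = u * v" and u: "u \<in> Sp N j" and v: "v \<in> {1..N}" by auto
  have IH: "0 < u \<and> u \<le> N ^ j \<and> (\<forall>p. prime p \<longrightarrow> p dvd u \<longrightarrow> p \<le> N)" using Suc.IH[OF u] .
  have "0 < m" using IH v m by simp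
  moreover have "m \<le> N ^ Suc j"
  proof -
    have "u * v \<le> N ^ j * N" using IH v by (intro mult_le_mono) auto
    then show ?thesis using m by (simp add: mult.commute)
  qed
  moreover have "\<forall>p. prime p \<longrightarrow> p dvd m \<longrightarrow> p \<le> N"
  proof (intro allI impI)
    fix p :: nat assume p: "prime p" "p dvd m"
    then have "p dvd u \<or> p dvd v" unfolding m by (simp add: prime_dvd_mult_iff)
    then show "p \<le> N"
    proof
      assume "p dvd u" then show ?thesis using IH p by auto
    next
      assume "p dvd v" then have "p \<le> v" using v by (intro dvd_imp_le) auto
      then show ?thesis using v by simp
    qed
  qed
  ultimately show ?case by blast
qed

lemma dpoly_power: "\<exists>b. \<forall>t. dirichlet_poly_it a N t ^ j = dpoly b (Sp N j) t"
proof (induction j)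
  case 0
  have "dpoly (\<lambda>_. 1) (Sp N 0) t = 1" for t by (simp add: dpoly_def)
  then show ?case by (intro exI[of _ "\<lambda>_. 1"]) simp
next
  case (Suc j)
  then obtain b where b: "\<And>t. dirichlet_poly_it a N t ^ j = dpoly b (Sp N j) t" by blast
  define b' where "b' = (\<lambda>m. \<Sum>x\<in>{x\<in>Sp N j \<times> {1..N}. fst x * snd x = m}. b (fst x) * a (snd x))"
  have "dirichlet_poly_it a N t ^ Suc j = dpoly b' (Sp N (Suc j)) t" for t
  proof -
    have "dirichlet_poly_it a N t ^ Suc j = dpoly b (Sp N j) t * dpoly a {1..N} t"
      by (simp only: power_Suc2 b) (simp only: dirichlet_dpoly)
    also have "\<dots> = dpoly b' (Sp N (Suc j)) t"
      unfolding b'_def Sp.simps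
      by (rule dpoly_mult) (auto simp: finite_Sp dest: Sp_prop)
    finally show ?thesis .
  qed
  then show ?case by blast
qed

lemma dpoly_CS: "finite S \<Longrightarrow> (cmod (dpoly c S t))^2 \<le> real (card S) * (\<Sum>m\<in>S. (cmod (c m))^2)"
proof -
  assume fS: "finite S"
  have "cmod (dpoly c S t) \<le> (\<Sum>m\<in>S. cmod (c m * exp (- \<i> * complex_of_real (t * ln (real m)))))"
    unfolding dpoly_def by (rule norm_sum)
  also have "\<dots> = (\<Sum>m\<in>S. cmod (c m))" by (simp add: norm_mult norm_exp_eq_Re)
  finally have "(cmod (dpoly c S t))^2 \<le> (\<Sum>m\<in>S. cmod (c m))^2" by (intro power_mono) auto
  also have "\<dots> \<le> (\<Sum>m\<in>S. (cmod (c m))^2) * real (card S)" by (rule sum_squared_le_sum_of_squares)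
  finally show ?thesis by (simp add: mult.commute)
qed


definition mean :: "(real \<Rightarrow> real) \<Rightarrow> real \<Rightarrow> real" where
  "mean g T = (1 / T) * integral {0..T} g"

lemma integrable_cont: "continuous_on UNIV (g :: real \<Rightarrow> real) \<Longrightarrow> g integrable_on {a..b}"
  using continuous_on_subset[of UNIV g "{a..b}"] by (auto intro: integrable_continuous_interval)

lemma mean_diff_bound:
  assumes cg: "continuous_on UNIV g" and ch: "continuous_on UNIV h"
    and b: "\<And>t. t \<ge> 0 \<Longrightarrow> \<bar>g t - h t\<bar> \<le> e" and T: "T > 0"
  shows "\<bar>mean g T - mean h T\<bar> \<le> e"
proof -
  have ig: "g integrable_on {0..T}" and ih: "h integrable_on {0..T}" using cg ch by (auto intro: integrable_cont)
  have id: "(\<lambda>t. g t - h t) integrable_on {0..T}" using ig ih by (rule integrable_diff)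
  have ic: "(\<lambda>t. e) integrable_on {0..T}" by (rule integrable_cont) (rule continuous_on_const)
  have icm: "(\<lambda>t. - e) integrable_on {0..T}" by (rule integrable_cont) (rule continuous_on_const)
  have b': "g t - h t \<le> e" "- e \<le> g t - h t" if "t \<ge> 0" for t using b[OF that] by (auto simp: abs_le_iff)
  have d: "integral {0..T} g - integral {0..T} h = integral {0..T} (\<lambda>t. g t - h t)"
    using ig ih by (simp add: integral_diff)
  have u: "integral {0..T} (\<lambda>t. g t - h t) \<le> integral {0..T} (\<lambda>t. e)"
    using id ic b' by (intro integral_le) auto
  have l: "integral {0..T} (\<lambda>t. - e) \<le> integral {0..T} (\<lambda>t. g t - h t)"
    using id icm b' by (intro integral_le) auto
  have "\<bar>integral {0..T} (\<lambda>t. g t - h t)\<bar> \<le> T * e"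
    using u l T by (simp add: abs_le_iff)
  then have "\<bar>integral {0..T} g - integral {0..T} h\<bar> / T \<le> e"
    using T d by (simp add: divide_le_eq mult.commute)
  moreover have "mean g T - mean h T = (integral {0..T} g - integral {0..T} h) / T"
    unfolding mean_def by (simp add: diff_divide_distrib)
  ultimately show ?thesis using T by simp
qed

lemma mean_sum:
  assumes fin: "finite I" and c: "\<And>i. i \<in> I \<Longrightarrow> continuous_on UNIV (g i)"
    and l: "\<And>i. i \<in> I \<Longrightarrow> (mean (g i) \<longlongrightarrow> L i) at_top"
  shows "(mean (\<lambda>t. \<Sum>i\<in>I. w i * g i t) \<longlongrightarrow> (\<Sum>i\<in>I. w i * L i)) at_top"
proof -
  have e: "mean (\<lambda>t. \<Sum>i\<in>I. w i * g i t) T = (\<Sum>i\<in>I. w i * mean (g i) T)" for T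
  proof -
    have "integral {0..T} (\<lambda>t. \<Sum>i\<in>I. w i * g i t) = (\<Sum>i\<in>I. integral {0..T} (\<lambda>t. w i * g i t))"
      using c fin by (intro integral_sum) (auto intro!: integrable_cont continuous_on_mult_left)
    also have "\<dots> = (\<Sum>i\<in>I. w i * integral {0..T} (g i))" by simp
    finally show ?thesis unfolding mean_def by (simp add: sum_distrib_left algebra_simps)
  qed
  show ?thesis unfolding e by (intro tendsto_sum tendsto_mult_left l)
qed

lemma mean_approx:
  assumes ch: "continuous_on UNIV h"
    and ap: "\<And>e. e > 0 \<Longrightarrow> \<exists>g L. continuous_on UNIV g \<and> (mean g \<longlongrightarrow> L) at_top \<and> (\<forall>t\<ge>0. \<bar>h t - g t\<bar> \<le> e)"
  shows "\<exists>L. (mean h \<longlongrightarrow> L) at_top"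
proof -
  define ep where "ep n = 1 / (real n + 1)" for n :: nat
  have ep0: "ep n > 0" for n unfolding ep_def by simp
  have "\<forall>n. \<exists>g L. continuous_on UNIV g \<and> (mean g \<longlongrightarrow> L) at_top \<and> (\<forall>t\<ge>0. \<bar>h t - g t\<bar> \<le> ep n)"
    using ap ep0 by blast
  then obtain G Lm where G: "\<And>n. continuous_on UNIV (G n)" "\<And>n. (mean (G n) \<longlongrightarrow> Lm n) at_top"
      "\<And>n t. t \<ge> 0 \<Longrightarrow> \<bar>h t - G n t\<bar> \<le> ep n"
    by metis
  have hg: "\<bar>mean h T - mean (G n) T\<bar> \<le> ep n" if "T > 0" for n T
    using mean_diff_bound[OF ch G(1) G(3) that] .
  have LL: "\<bar>Lm n - Lm m\<bar> \<le> ep n + ep m" for n m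
  proof -
    have "((\<lambda>T. \<bar>mean (G n) T - mean (G m) T\<bar>) \<longlongrightarrow> \<bar>Lm n - Lm m\<bar>) at_top"
      by (intro tendsto_rabs tendsto_diff G(2))
    moreover have "\<forall>\<^sub>F T in at_top. \<bar>mean (G n) T - mean (G m) T\<bar> \<le> ep n + ep m"
      using eventually_gt_at_top[of "0::real"]
    proof eventually_elim
      case (elim T)
      show ?case using hg[OF elim, of n] hg[OF elim, of m] by linarith
    qed
    ultimately show ?thesis by (rule tendsto_upperbound) simp
  qed
  have epsmall: "\<exists>N. \<forall>n\<ge>N. ep n < e" if "e > 0" for e
  proof -
    obtain N :: nat where N: "1 / e < real N" using reals_Archimedean2 by blast
    have "ep n < e" if "n \<ge> N" for n
    proof -
      have "1 / e < real n + 1" using N that by linarith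
      then show ?thesis unfolding ep_def using \<open>e > 0\<close> by (simp add: field_simps)
    qed
    then show ?thesis by blast
  qed
  have "Cauchy Lm"
  proof (rule metric_CauchyI)
    fix e :: real assume e: "e > 0"
    obtain N where N: "\<And>n. n \<ge> N \<Longrightarrow> ep n < e / 2" using epsmall[of "e/2"] e by auto
    have "\<forall>m\<ge>N. \<forall>n\<ge>N. dist (Lm m) (Lm n) < e"
    proof (intro allI impI)
      fix m n assume "m \<ge> N" "n \<ge> N"
      then show "dist (Lm m) (Lm n) < e" using LL[of m n] N[of m] N[of n] by (simp add: dist_real_def)
    qed
    then show "\<exists>M. \<forall>m\<ge>M. \<forall>n\<ge>M. dist (Lm m) (Lm n) < e" by blast
  qed
  then obtain L0 where L0: "Lm \<longlonglongrightarrow> L0" using Cauchy_convergent_iff convergent_def by blast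
  have "(mean h \<longlongrightarrow> L0) at_top"
  proof (rule tendstoI)
    fix e :: real assume e: "e > 0"
    obtain N1 where N1: "\<And>n. n \<ge> N1 \<Longrightarrow> ep n < e / 3" using epsmall[of "e/3"] e by auto
    obtain N2 where N2: "\<And>n. n \<ge> N2 \<Longrightarrow> dist (Lm n) L0 < e / 3"
      using L0 e unfolding lim_sequentially by (meson zero_less_divide_iff zero_less_numeral)
    define n where "n = max N1 N2"
    have a: "ep n < e / 3" using N1 unfolding n_def by simp
    have b: "dist (Lm n) L0 < e / 3" using N2 unfolding n_def by simp
    have "\<forall>\<^sub>F T in at_top. dist (mean (G n) T) (Lm n) < e / 3"
      using G(2)[of n] e by (intro tendstoD) auto
    then show "\<forall>\<^sub>F T in at_top. dist (mean h T) L0 < e"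
      using eventually_gt_at_top[of "0::real"]
    proof eventually_elim
      case (elim T)
      show ?case using elim(1) hg[OF elim(2), of n] a b by (simp add: dist_real_def) (smt (verit))
    qed
  qed
  then show ?thesis by blast
qed

lemma powr_tangent:
  fixes y y0 th :: real
  assumes y: "y \<ge> 0" and y0: "y0 > 0" and th: "0 < th" "th \<le> 1"
  shows "y powr th \<le> y0 powr th + th * y0 powr (th - 1) * (y - y0)"
proof -
  have key: "x powr th \<le> 1 + th * (x - 1)" if x: "x \<ge> 0" for x :: real
  proof (cases "x = 0")
    case True then show ?thesis using th by simp
  next
    case False
    then have x0: "x > 0" using x by simp
    have "exp ((1 - th) *\<^sub>R 0 + th *\<^sub>R ln x) \<le> (1 - th) * exp 0 + th * exp (ln x)"
      using th by (intro convex_onD[OF exp_convex]) auto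
    then show ?thesis using x0 by (simp add: powr_def algebra_simps)
  qed
  have "y powr th = y0 powr th * (y / y0) powr th" using y y0 by (simp add: powr_divide)
  also have "\<dots> \<le> y0 powr th * (1 + th * (y / y0 - 1))"
    using key[of "y / y0"] y y0 by (intro mult_left_mono) auto
  also have "\<dots> = y0 powr th + th * (y0 powr th / y0) * (y - y0)"
    using y0 by (simp add: field_simps)
  also have "y0 powr th / y0 = y0 powr (th - 1)" using y0 by (simp add: powr_diff)
  finally show ?thesis .
qed


lemma cont_f: "continuous_on UNIV (\<lambda>t. dirichlet_poly_it a N t)"
  unfolding dirichlet_dpoly by (rule continuous_dpoly)

lemma mean_int_power:
  "\<exists>b. (\<forall>t. dirichlet_poly_it a N t ^ i = dpoly b (Sp N i) t) \<and>
       (mean (\<lambda>t. cmod (dirichlet_poly_it a N t) ^ (2*i)) \<longlongrightarrow> (\<Sum>m\<in>Sp N i. (cmod (b m))^2)) at_top"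
proof -
  obtain b where b: "\<And>t. dirichlet_poly_it a N t ^ i = dpoly b (Sp N i) t"
    using dpoly_power by blast
  have e: "cmod (dirichlet_poly_it a N t) ^ (2*i) = (cmod (dpoly b (Sp N i) t))^2" for t
    by (simp add: b[symmetric] norm_power power_mult[symmetric] mult.commute)
  have "(mean (\<lambda>t. cmod (dirichlet_poly_it a N t) ^ (2*i)) \<longlongrightarrow> (\<Sum>m\<in>Sp N i. (cmod (b m))^2)) at_top"
    unfolding e mean_def by (rule parseval) (auto simp: finite_Sp dest: Sp_prop)
  then show ?thesis using b by blast
qed

lemma norm_f_bound: "cmod (dirichlet_poly_it a N t) \<le> (\<Sum>n\<in>{1..N}. cmod (a n))"
proof -
  have "cmod (dirichlet_poly_it a N t) \<le> (\<Sum>n\<in>{1..N}. cmod (a n * exp (- \<i> * complex_of_real (t * ln (real n)))))"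
    unfolding dirichlet_poly_it_def by (rule norm_sum)
  also have "\<dots> = (\<Sum>n\<in>{1..N}. cmod (a n))" by (simp add: norm_mult norm_exp_eq_Re)
  finally show ?thesis .
qed

lemma mean_powr_exists:
  assumes k: "k > 0"
  shows "\<exists>L. (mean (\<lambda>t. cmod (dirichlet_poly_it a N t) powr (2*k)) \<longlongrightarrow> L) at_top"
proof (rule mean_approx)
  define f where "f t = dirichlet_poly_it a N t" for t
  have cf: "continuous_on UNIV f" unfolding f_def by (rule cont_f)
  show "continuous_on UNIV (\<lambda>t. cmod (dirichlet_poly_it a N t) powr (2 * k))"
    by (rule continuous_on_powr'[OF continuous_on_norm[OF cont_f] continuous_on_const]) (use k in simp)
  fix e :: real assume e: "e > 0"
  define R where "R = (\<Sum>n\<in>{1..N}. cmod (a n))"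
  have fR: "cmod (f t) \<le> R" for t unfolding f_def R_def by (rule norm_f_bound)
  have R0: "R \<ge> 0" using fR[of 0] norm_ge_zero[of "f 0"] by linarith
  have cphi: "continuous_on {0..R^2} (\<lambda>x::real. x powr k)"
    by (rule continuous_on_powr'[OF continuous_on_id continuous_on_const]) (use k in simp)
  obtain g where g: "real_polynomial_function g" "\<And>x. x \<in> {0..R^2} \<Longrightarrow> \<bar>x powr k - g x\<bar> < e"
    using Stone_Weierstrass_real_polynomial_function[OF compact_Icc cphi e] by blast
  obtain c n where gs: "g = (\<lambda>x. \<Sum>i\<le>n. c i * x^i)" using real_polynomial_function_imp_sum[OF g(1)] by blast
  have "\<forall>i. \<exists>L. (mean (\<lambda>t. cmod (f t) ^ (2*i)) \<longlongrightarrow> L) at_top"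
    unfolding f_def using mean_int_power by blast
  then obtain Li where Li: "\<And>i. (mean (\<lambda>t. cmod (f t) ^ (2*i)) \<longlongrightarrow> Li i) at_top" by metis
  define G where "G t = (\<Sum>i\<le>n. c i * cmod (f t) ^ (2*i))" for t
  have cG: "continuous_on UNIV G" unfolding G_def by (intro continuous_intros cf)
  have mG: "(mean G \<longlongrightarrow> (\<Sum>i\<le>n. c i * Li i)) at_top"
    unfolding G_def
  proof (rule mean_sum)
    fix i show "continuous_on UNIV (\<lambda>t. cmod (f t) ^ (2*i))"
      by (rule continuous_on_power[OF continuous_on_norm[OF cf]])
  qed (auto intro: Li)
  have bnd: "\<forall>t\<ge>0. \<bar>cmod (dirichlet_poly_it a N t) powr (2 * k) - G t\<bar> \<le> e"
  proof (intro allI impI)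
    fix t :: real assume "t \<ge> 0"
    have x: "(cmod (f t))^2 \<in> {0..R^2}" using fR[of t] by (auto intro: power_mono)
    have "G t = g ((cmod (f t))^2)" unfolding G_def gs by (simp add: power_mult)
    moreover have "cmod (f t) powr (2 * k) = ((cmod (f t))^2) powr k"
    proof (cases "f t = 0")
      case True then show ?thesis using k by simp
    next
      case False
      then have x0: "cmod (f t) > 0" by simp
      have e: "(cmod (f t))^2 = cmod (f t) powr 2" using powr_realpow[OF x0, of 2] by simp
      have "((cmod (f t))^2) powr k = (cmod (f t) powr 2) powr k" by (simp only: e)
      also have "\<dots> = cmod (f t) powr (2 * k)" by (rule powr_powr)
      finally show ?thesis by (rule sym)
    qed
    ultimately show "\<bar>cmod (dirichlet_poly_it a N t) powr (2 * k) - G t\<bar> \<le> e"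
      using g(2)[OF x] unfolding f_def by simp
  qed
  show "\<exists>g L. continuous_on UNIV g \<and> (mean g \<longlongrightarrow> L) at_top \<and>
      (\<forall>t\<ge>0. \<bar>cmod (dirichlet_poly_it a N t) powr (2 * k) - g t\<bar> \<le> e)"
    using cG mG bnd by blast
qed

lemma mean_mono_tangent:
  assumes cY: "continuous_on UNIV Y" and Y0: "\<And>t. Y t \<ge> 0"
    and cZ: "continuous_on UNIV Z" and ZY: "\<And>t. Z t = Y t powr th"
    and th: "0 < th" "th \<le> 1"
    and lY: "(mean Y \<longlongrightarrow> LY) at_top" and lZ: "(mean Z \<longlongrightarrow> LZ) at_top"
    and y0: "y0 > 0"
  shows "LZ \<le> y0 powr th + th * y0 powr (th - 1) * (LY - y0)"
proof -
  define \<alpha> where "\<alpha> = y0 powr th - th * y0 powr (th - 1) * y0"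
  define \<beta> where "\<beta> = th * y0 powr (th - 1)"
  have pt: "Z t \<le> \<alpha> + \<beta> * Y t" for t
    using powr_tangent[OF Y0 y0 th, of t] unfolding ZY \<alpha>_def \<beta>_def by (simp add: algebra_simps)
  have ev: "\<forall>\<^sub>F T in at_top. mean Z T \<le> \<alpha> + \<beta> * mean Y T"
    using eventually_gt_at_top[of "0::real"]
  proof eventually_elim
    case (elim T)
    have iY: "Y integrable_on {0..T}" using cY by (rule integrable_cont)
    have iZ: "Z integrable_on {0..T}" using cZ by (rule integrable_cont)
    have iR: "(\<lambda>t. \<alpha> + \<beta> * Y t) integrable_on {0..T}"
      by (rule integrable_cont) (intro continuous_intros cY)
    have "integral {0..T} Z \<le> integral {0..T} (\<lambda>t. \<alpha> + \<beta> * Y t)"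
      using iZ iR pt by (intro integral_le) auto
    also have "\<dots> = \<alpha> * T + \<beta> * integral {0..T} Y"
    proof -
      have "integral {0..T} (\<lambda>t. \<alpha> + \<beta> * Y t) = integral {0..T} (\<lambda>t. \<alpha>) + integral {0..T} (\<lambda>t. \<beta> * Y t)"
        using iY by (intro integral_add) (auto intro: integrable_cont continuous_on_const integrable_on_mult_right)
      then show ?thesis using elim by simp
    qed
    finally have "integral {0..T} Z \<le> \<alpha> * T + \<beta> * integral {0..T} Y" .
    then have "integral {0..T} Z / T \<le> (\<alpha> * T + \<beta> * integral {0..T} Y) / T"
      using elim by (intro divide_right_mono) auto
    then show ?case unfolding mean_def using elim by (simp add: field_simps)
  qed
  have "LZ \<le> \<alpha> + \<beta> * LY"
    by (rule tendsto_le[OF _ tendsto_add[OF tendsto_const tendsto_mult_left[OF lY]] lZ ev]) simp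
  then show ?thesis unfolding \<alpha>_def \<beta>_def by (simp add: algebra_simps)
qed

lemma jensen_limit:
  assumes cY: "continuous_on UNIV Y" and Y0: "\<And>t. Y t \<ge> 0"
    and cZ: "continuous_on UNIV Z" and ZY: "\<And>t. Z t = Y t powr th"
    and th: "0 < th" "th \<le> 1"
    and lY: "(mean Y \<longlongrightarrow> LY) at_top" and lZ: "(mean Z \<longlongrightarrow> LZ) at_top"
  shows "LY \<ge> 0" and "LZ \<le> LY powr th"
proof -
  have ev: "\<forall>\<^sub>F T in at_top. mean Y T \<ge> 0"
    using eventually_gt_at_top[of "0::real"]
  proof eventually_elim
    case (elim T)
    have "integral {0..T} Y \<ge> 0" using Y0 cY by (intro integral_nonneg integrable_cont) auto
    then show ?case unfolding mean_def using elim by simp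
  qed
  show LY0: "LY \<ge> 0" by (rule tendsto_lowerbound[OF lY ev]) simp
  note mt = mean_mono_tangent[OF cY Y0 cZ ZY th lY lZ]
  show "LZ \<le> LY powr th"
  proof (cases "LY > 0")
    case True
    from mt[OF True] show ?thesis by simp
  next
    case False
    then have LY: "LY = 0" using LY0 by simp
    have small: "LZ \<le> y0 powr th" if "y0 > 0" for y0
    proof -
      have "LZ \<le> y0 powr th + th * y0 powr (th - 1) * (0 - y0)" using mt[OF that] LY by simp
      also have "\<dots> \<le> y0 powr th" using th that by (simp add: mult_nonneg_nonneg)
      finally show ?thesis .
    qed
    show ?thesis
    proof (rule ccontr)
      assume "\<not> LZ \<le> LY powr th"
      then have LZ0: "LZ > 0" using LY by simp
      define y0 where "y0 = (LZ / 2) powr (1 / th)"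
      have y0p: "y0 > 0" unfolding y0_def using LZ0 by simp
      have "y0 powr th = LZ / 2" unfolding y0_def using LZ0 th by (simp add: powr_powr)
      then show False using small[OF y0p] LZ0 by simp
    qed
  qed
qed


lemma prime_pi_ge1: "N \<ge> 2 \<Longrightarrow> prime_pi N \<ge> 1"
proof -
  assume N: "N \<ge> 2"
  have "2 \<in> {p::nat. prime p \<and> p \<le> N}" using N by simp
  moreover have "finite {p::nat. prime p \<and> p \<le> N}" by simp
  ultimately have "card {p::nat. prime p \<and> p \<le> N} > 0" unfolding card_gt_0_iff by blast
  then show ?thesis unfolding prime_pi_def by simp
qed

lemma powr_root_eq: "x \<ge> 0 \<Longrightarrow> j \<ge> 1 \<Longrightarrow> (x ^ (2*j)) powr (1 / (2 * real j)) = (x::real)"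
proof -
  assume x: "x \<ge> 0" and j: "j \<ge> 1"
  show ?thesis
  proof (cases "x = 0")
    case True then show ?thesis using j by simp
  next
    case False
    then have x0: "x > 0" using x by simp
    have "x ^ (2*j) = x powr real (2*j)" using powr_realpow[OF x0, of "2*j"] by simp
    then have "(x ^ (2*j)) powr (1 / (2 * real j)) = x powr (real (2*j) * (1 / (2 * real j)))"
      by (simp add: powr_powr)
    also have "real (2*j) * (1 / (2 * real j)) = 1" using j by simp
    finally show ?thesis using x0 by simp
  qed
qed

lemma main_bound:
  assumes N: "N \<ge> 2" and k: "k \<ge> real (prime_pi N)"
  shows "dp_sup_norm a N \<le> exp (259/2) * dp_norm (2 * k) a N"
proof -
  define f where "f t = dirichlet_poly_it a N t" for t
  define j where "j = nat \<lfloor>k\<rfloor>"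
  have pi1: "prime_pi N \<ge> 1" using prime_pi_ge1[OF N] .
  have k1: "k \<ge> 1" using pi1 k by linarith
  have jpi: "prime_pi N \<le> j" unfolding j_def using k by (simp add: le_nat_floor le_floor_iff)
  have j1: "j \<ge> 1" using pi1 jpi by simp
  have jk: "real j \<le> k" unfolding j_def using k1 by linarith
  have k0: "k > 0" using k1 by simp
  define th where "th = real j / k"
  have th: "0 < th" "th \<le> 1" unfolding th_def using j1 jk k0 by auto
  define Y where "Y t = cmod (f t) powr (2 * k)" for t
  define Z where "Z t = cmod (f t) ^ (2 * j)" for t
  have cf: "continuous_on UNIV f" unfolding f_def by (rule cont_f)
  have cY: "continuous_on UNIV Y" unfolding Y_def
    by (rule continuous_on_powr'[OF continuous_on_norm[OF cf] continuous_on_const]) (use k0 in simp)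
  have cZ: "continuous_on UNIV Z" unfolding Z_def
    by (rule continuous_on_power[OF continuous_on_norm[OF cf]])
  have Y0: "Y t \<ge> 0" for t unfolding Y_def by simp
  have ZY: "Z t = Y t powr th" for t
  proof (cases "f t = 0")
    case True then show ?thesis unfolding Z_def Y_def using j1 k0 th by simp
  next
    case False
    then have x0: "cmod (f t) > 0" by simp
    have "Y t powr th = cmod (f t) powr (2 * k * th)" unfolding Y_def by (simp add: powr_powr)
    also have "2 * k * th = real (2 * j)" unfolding th_def using k0 by simp
    also have "cmod (f t) powr real (2 * j) = Z t" unfolding Z_def using powr_realpow[OF x0, of "2*j"] by simp
    finally show ?thesis by simp
  qed
  obtain b where b: "\<And>t. f t ^ j = dpoly b (Sp N j) t"
    and lZ: "(mean Z \<longlongrightarrow> (\<Sum>m\<in>Sp N j. (cmod (b m))^2)) at_top"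
    using mean_int_power[of a N j] unfolding f_def Z_def by blast
  define Lj where "Lj = (\<Sum>m\<in>Sp N j. (cmod (b m))^2)"
  obtain LY where lY: "(mean Y \<longlongrightarrow> LY) at_top"
    using mean_powr_exists[OF k0, of a N] unfolding Y_def f_def by blast
  have LY0: "LY \<ge> 0" and LjY: "Lj \<le> LY powr th"
    using jensen_limit[OF cY Y0 cZ ZY th lY lZ] unfolding Lj_def by auto
  have Lj0: "Lj \<ge> 0" unfolding Lj_def by (intro sum_nonneg) auto
  have norm_eq: "dp_norm (2 * k) a N = LY powr (1 / (2 * k))"
  proof -
    have "(\<lambda>T::real. (1 / T) * integral {0..T} (\<lambda>t. cmod (dirichlet_poly_it a N t) powr (2 * k))) = mean Y"
      unfolding mean_def Y_def f_def by simp
    moreover have "Lim at_top (mean Y) = LY" by (rule tendsto_Lim[OF _ lY]) simp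
    ultimately show ?thesis unfolding dp_norm_def by simp
  qed
  have card: "real (card (Sp N j)) \<le> exp (259 * real j)"
  proof -
    have "Sp N j \<subseteq> SM N j" using Sp_prop unfolding SM_def by blast
    then have "card (Sp N j) \<le> card (SM N j)" by (intro card_mono finite_SM)
    then have "real (card (Sp N j)) \<le> real (card (SM N j))" by simp
    also have "\<dots> \<le> exp (259 * real j)" by (rule card_SM[OF N jpi])
    finally show ?thesis .
  qed
  have pt: "cmod (f t) \<le> exp (259/2) * LY powr (1 / (2 * k))" for t
  proof -
    have "Z t = (cmod (dpoly b (Sp N j) t))^2"
      unfolding Z_def by (simp add: b[symmetric] norm_power power_mult[symmetric] mult.commute)
    also have "\<dots> \<le> real (card (Sp N j)) * Lj" unfolding Lj_def by (rule dpoly_CS[OF finite_Sp])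
    also have "\<dots> \<le> exp (259 * real j) * LY powr th"
      using card LjY Lj0 by (intro mult_mono) auto
    finally have Zb: "Z t \<le> exp (259 * real j) * LY powr th" .
    have "cmod (f t) = Z t powr (1 / (2 * real j))" unfolding Z_def using j1 by (simp add: powr_root_eq)
    also have "\<dots> \<le> (exp (259 * real j) * LY powr th) powr (1 / (2 * real j))"
      using Zb unfolding Z_def by (intro powr_mono2) auto
    also have "\<dots> = exp (259 * real j) powr (1 / (2 * real j)) * (LY powr th) powr (1 / (2 * real j))"
      using LY0 by (simp add: powr_mult)
    also have "exp (259 * real j) powr (1 / (2 * real j)) = exp (259/2)"
      using j1 by (simp add: powr_def)
    also have "(LY powr th) powr (1 / (2 * real j)) = LY powr (1 / (2 * k))"
      unfolding th_def using j1 k0 by (simp add: powr_powr mult.commute)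
    finally show ?thesis .
  qed
  show ?thesis
    unfolding dp_sup_norm_def norm_eq using pt unfolding f_def
    by (intro cSUP_least) auto
qed

theorem corollary1:
  shows "\<exists>c::real. c > 0 \<and> (\<exists>C::real. C > 0 \<and>
           (\<forall>(N::nat) (a::nat \<Rightarrow> complex) (k::real).
              N \<ge> 2 \<longrightarrow>
              (k \<ge> c * real N / ln (real N) \<or> k \<ge> real (prime_pi N)) \<longrightarrow>
              dp_sup_norm a N \<le> C * dp_norm (2 * k) a N))"
proof (intro exI conjI allI impI)
  show "(8::real) > 0" by simp
  show "exp (259/2) > (0::real)" by simp
  fix N :: nat and a :: "nat \<Rightarrow> complex" and k :: real
  assume N: "N \<ge> 2" and h: "k \<ge> 8 * real N / ln (real N) \<or> k \<ge> real (prime_pi N)"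
  have "k \<ge> real (prime_pi N)"
    using h prime_pi_upper[OF N] by linarith
  then show "dp_sup_norm a N \<le> exp (259/2) * dp_norm (2 * k) a N" by (rule main_bound[OF N])
qed

end
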